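(* Let $\mathbb P$ be a probability measure on $(\Omega,\mathcal F)$, $\delta>0$, and $\phi$ as in the context. For $A\in\mathcal F$ let $\overline{\mathbb Q}(A)=\sup_{\mathbb Q\in\mathcal P_\phi(\mathbb P,\delta)}\mathbb Q(A)$. Then $\overline{\mathbb Q}(A)=g_{\phi,\delta}(\mathbb P(A))$ for all $A\in\mathcal F$, where $g_{\phi,\delta}(0)=0$, $g_{\phi,\delta}(1)=1$ and $$g_{\phi,\delta}(x)=\sup\{t\in[x,1]: x\phi(t/x)+(1-x)\phi((1-t)/(1-x))\le\delta\},\quad x\in(0,1).$$ Moreover, if $\phi$ is real-valued (i.e. $\phi:[0,\infty)\to\mathbb R$), strictly convex, and $\lim_{x\to\infty}\phi(x)/x=\infty$, then there is a unique $x_\delta\in(0,1)$ solving $x\phi(1/x)+(1-x)\phi(0)=\delta$, the function $g_{\phi,\delta}$ is continuous and strictly increasing on $[0,x_\delta]$, $g_{\phi,\delta}(x)=1$ for $x\in[x_\delta,1]$, and for every $x\in(0,1)$ we have $g_{\phi,\delta}(x)>x$ and $g_{\phi,\delta}(x)\downarrow x$ as $\delta\downarrow0$.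
   Context: $\phi:[0,\infty)\to\mathbb R\cup\{\infty\}$ is convex with $\phi(1)=0$ and $\phi(0)=\lim_{x\downarrow0}\phi(x)$. For probability measures $\mathbb Q\ll\mathbb P$, the $\phi$-divergence is $D_\phi(\mathbb Q\|\mathbb P)=\mathbb E^{\mathbb P}[\phi(\mathrm d\mathbb Q/\mathrm d\mathbb P)]$, and $\mathcal P_\phi(\mathbb P,\delta)=\{\mathbb Q\ll\mathbb P: D_\phi(\mathbb Q\|\mathbb P)\le\delta\}$ for $\delta>0$. *)

theory Defs
  imports "HOL-Probability.Probability"
begin

text \<open>Admissible divergence generators: \<open>phi : [0,\<infinity>) \<rightarrow> \<real> \<union> {\<infinity>}\<close>, convex
  (in the extended sense), \<open>phi 1 = 0\<close>, and \<open>phi 0 = lim_{x \<down> 0} phi x\<close>.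
  Values of \<open>phi\<close> on negative reals are irrelevant.\<close>

definition convex_ext :: "(real \<Rightarrow> ereal) \<Rightarrow> bool" where
  "convex_ext phi \<longleftrightarrow>
     (\<forall>x\<ge>0. \<forall>y\<ge>0. \<forall>t\<in>{0..1}.
        phi (t * x + (1 - t) * y) \<le> ereal t * phi x + ereal (1 - t) * phi y)"

definition admissible_phi :: "(real \<Rightarrow> ereal) \<Rightarrow> bool" where
  "admissible_phi phi \<longleftrightarrow>
     (\<forall>x\<ge>0. phi x \<noteq> -\<infinity>) \<and> convex_ext phi \<and> phi 1 = 0 \<and>
     (phi \<longlongrightarrow> phi 0) (at_right 0)"

definition strictly_convex_ext :: "(real \<Rightarrow> ereal) \<Rightarrow> bool" where
  "strictly_convex_ext phi \<longleftrightarrow>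
     (\<forall>x\<ge>0. \<forall>y\<ge>0. x \<noteq> y \<longrightarrow> (\<forall>t\<in>{0<..<1}.
        phi (t * x + (1 - t) * y) < ereal t * phi x + ereal (1 - t) * phi y))"

text \<open>\<open>D_phi(Q\<parallel>P) = E^P[phi(dQ/dP)]\<close>, the expectation of an extended-real
  function taken as (integral of positive part) - (integral of negative part).\<close>

definition phi_div :: "(real \<Rightarrow> ereal) \<Rightarrow> 'a measure \<Rightarrow> 'a measure \<Rightarrow> ereal" where
  "phi_div phi Q P =
     enn2ereal (\<integral>\<^sup>+ w. e2ennreal (phi (enn2real (RN_deriv P Q w))) \<partial>P)
     - enn2ereal (\<integral>\<^sup>+ w. e2ennreal (- phi (enn2real (RN_deriv P Q w))) \<partial>P)"

definition phi_ball :: "(real \<Rightarrow> ereal) \<Rightarrow> 'a measure \<Rightarrow> real \<Rightarrow> 'a measure set" where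
  "phi_ball phi P \<delta> =
     {Q. sets Q = sets P \<and> prob_space Q \<and> absolutely_continuous P Q \<and>
         phi_div phi Q P \<le> ereal \<delta>}"

definition upper_prob :: "(real \<Rightarrow> ereal) \<Rightarrow> 'a measure \<Rightarrow> real \<Rightarrow> 'a set \<Rightarrow> real" where
  "upper_prob phi P \<delta> A = Sup ((\<lambda>Q. measure Q A) ` phi_ball phi P \<delta>)"

definition g_fun :: "(real \<Rightarrow> ereal) \<Rightarrow> real \<Rightarrow> real \<Rightarrow> real" where
  "g_fun phi \<delta> x =
     (if x = 0 then 0 else if x = 1 then 1 else
      Sup {t \<in> {x..1}. ereal x * phi (t / x) + ereal (1 - x) * phi ((1 - t) / (1 - x))
                         \<le> ereal \<delta>})"

end

theory Submission
  imports Defs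
begin

lemma adm_conv:
  assumes "admissible_phi phi" "x \<ge> 0" "y \<ge> 0" "0 \<le> t" "t \<le> 1"
  shows "phi (t * x + (1 - t) * y) \<le> ereal t * phi x + ereal (1 - t) * phi y"
  using assms unfolding admissible_phi_def convex_ext_def by auto

lemma adm_nm: "admissible_phi phi \<Longrightarrow> x \<ge> 0 \<Longrightarrow> phi x \<noteq> -\<infinity>"
  unfolding admissible_phi_def by auto

lemma adm_one: "admissible_phi phi \<Longrightarrow> phi 1 = 0"
  unfolding admissible_phi_def by auto

lemma ereal_comb_le:
  fixes a b c :: ereal
  assumes "a \<le> c" "b \<le> c" "0 \<le> t" "t \<le> 1" "a \<noteq> -\<infinity>" "b \<noteq> -\<infinity>"
  shows "ereal t * a + ereal (1 - t) * b \<le> c"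
proof (cases c)
  case (real r)
  then obtain ra rb where ra: "a = ereal ra" and rb: "b = ereal rb" using assms
    by (cases a; cases b) auto
  have "t * ra + (1 - t) * rb \<le> t * r + (1 - t) * r"
    using assms ra rb real by (intro add_mono mult_left_mono) auto
  then show ?thesis using ra rb real by (simp add: algebra_simps)
next
  case PInf then show ?thesis by simp
next
  case MInf then show ?thesis using assms by (cases a) auto
qed

lemma adm_meas:
  assumes "admissible_phi phi"
  shows "(\<lambda>s. phi (max 0 s)) \<in> borel_measurable borel"
  unfolding borel_measurable_iff_Iic_ereal
proof
  fix c :: ereal
  have "is_interval ((\<lambda>s. phi (max 0 s)) -` {..c} \<inter> space borel)"
    unfolding is_interval_1
  proof (intro ballI allI impI)
    fix a b x :: real
    assume h: "a \<in> (\<lambda>s. phi (max 0 s)) -` {..c} \<inter> space borel"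
      "b \<in> (\<lambda>s. phi (max 0 s)) -` {..c} \<inter> space borel" and h3: "a \<le> x \<and> x \<le> b"
    define u where "u = max 0 a"
    define v where "v = max 0 b"
    define w where "w = max 0 x"
    have uv: "u \<le> w" "w \<le> v" "0 \<le> u" using h3 unfolding u_def v_def w_def by auto
    have pu: "phi u \<le> c" "phi v \<le> c" using h unfolding u_def v_def by auto
    show "x \<in> (\<lambda>s. phi (max 0 s)) -` {..c} \<inter> space borel"
    proof (cases "u = v")
      case True
      then have "w = u" using uv by auto
      then show ?thesis using pu unfolding w_def by auto
    next
      case False
      then have uv': "u < v" using uv by auto
      define t where "t = (v - w) / (v - u)"
      have t: "0 \<le> t" "t \<le> 1" using uv uv' unfolding t_def by (auto simp: field_simps)
      have tv: "t * (v - u) = v - w" using uv' unfolding t_def by simp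
      have tv2: "t * v - t * u = v - w" using tv by (simp add: right_diff_distrib)
      have "t * u + (1 - t) * v = t * u + v - t * v" by (simp add: left_diff_distrib)
      then have "t * u + (1 - t) * v = w" using tv2 by linarith
      then have "phi w \<le> ereal t * phi u + ereal (1 - t) * phi v"
        using adm_conv[OF assms, of u v t] uv t by auto
      also have "\<dots> \<le> c"
        using ereal_comb_le[OF pu t] adm_nm[OF assms] uv by auto
      finally show ?thesis unfolding w_def by auto
    qed
  qed
  then show "(\<lambda>s. phi (max 0 s)) -` {..c} \<inter> space borel \<in> sets borel"
    by (rule real_interval_borel_measurable)
qed

lemma adm_meas_comp:
  assumes "admissible_phi phi" "f \<in> borel_measurable M" "\<And>w. f w \<ge> 0"
  shows "(\<lambda>w. phi (f w)) \<in> borel_measurable M"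
proof -
  have "(\<lambda>w. phi (max 0 (f w))) \<in> borel_measurable M"
    using measurable_compose[OF assms(2) adm_meas[OF assms(1)]] by simp
  moreover have "(\<lambda>w. phi (max 0 (f w))) = (\<lambda>w. phi (f w))" using assms(3)
    by (simp add: max_absorb2)
  ultimately show ?thesis by simp
qed

lemma adm_quasi:
  assumes "admissible_phi phi" "0 \<le> u" "u \<le> w" "w \<le> v" "phi u \<le> c" "phi v \<le> c"
  shows "phi w \<le> c"
proof (cases "u = v")
  case True
  then have "w = u" using assms by auto
  then show ?thesis using assms by auto
next
  case False
  then have uv': "u < v" using assms by auto
  define t where "t = (v - w) / (v - u)"
  have t: "0 \<le> t" "t \<le> 1" using assms uv' unfolding t_def by (auto simp: field_simps)
  have tv: "t * (v - u) = v - w" using uv' unfolding t_def by simp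
  have tv2: "t * v - t * u = v - w" using tv by (simp add: right_diff_distrib)
  have "t * u + (1 - t) * v = t * u + v - t * v" by (simp add: left_diff_distrib)
  then have "t * u + (1 - t) * v = w" using tv2 by linarith
  then have "phi w \<le> ereal t * phi u + ereal (1 - t) * phi v"
    using adm_conv[OF assms(1), of u v t] assms t by auto
  also have "\<dots> \<le> c"
    using ereal_comb_le[OF assms(5,6) t] adm_nm[OF assms(1)] assms by auto
  finally show ?thesis .
qed

lemma e2ennreal_neq_top: "e2ennreal x \<noteq> top \<Longrightarrow> x \<noteq> \<infinity>"
  by auto

lemma e2ennreal_top_iff: "e2ennreal x = top \<longleftrightarrow> x = \<infinity>"
  by (cases x) (auto simp: e2ennreal_neg)

lemma adm_support:
  assumes adm: "admissible_phi phi" and "0 \<le> a" "a < m" "m < b" "phi a < \<infinity>" "phi b < \<infinity>"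
  shows "\<exists>c. phi m = ereal (real_of_ereal (phi m)) \<and>
     (\<forall>s\<ge>0. ereal (real_of_ereal (phi m) + c * (s - m)) \<le> phi s)"
proof -
  define I where "I = {s. 0 \<le> s \<and> phi s < \<infinity>}"
  define ph where "ph = (\<lambda>s. real_of_ereal (phi s))"
  have fin: "phi s = ereal (ph s)" if "s \<in> I" for s
    using that adm_nm[OF adm, of s] unfolding I_def ph_def by (cases "phi s") auto
  have ivl: "is_interval I"
    unfolding is_interval_1
  proof (intro ballI allI impI)
    fix u v w assume "u \<in> I" "v \<in> I" "u \<le> w \<and> w \<le> v"
    then have "phi w \<le> max (phi u) (phi v)" "0 \<le> w" "phi u < \<infinity>" "phi v < \<infinity>"
      using adm_quasi[OF adm, of u w v "max (phi u) (phi v)"] unfolding I_def by auto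
    then show "w \<in> I" unfolding I_def by (auto simp: max_def split: if_splits)
  qed
  have cI: "convex I" using ivl by (simp add: is_interval_convex_1)
  have conv: "convex_on I ph"
  proof (rule convex_onI[OF _ cI])
    fix t x y :: real assume t: "0 < t" "t < 1" and xy: "x \<in> I" "y \<in> I"
    have "(1 - t) * x + t * y \<in> I"
      using convex_alt[THEN iffD1, OF cI, rule_format, OF xy, of t] t by simp
    have "phi ((1 - t) * x + (1 - (1 - t)) * y) \<le> ereal (1 - t) * phi x + ereal (1 - (1 - t)) * phi y"
      using adm_conv[OF adm, of x y "1 - t"] xy t unfolding I_def by auto
    then have "ereal (ph ((1 - t) * x + t * y)) \<le> ereal ((1 - t) * ph x + t * ph y)"
      using fin[OF xy(1)] fin[OF xy(2)] fin[OF \<open>(1 - t) * x + t * y \<in> I\<close>] by simp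
    then show "ph ((1 - t) *\<^sub>R x + t *\<^sub>R y) \<le> (1 - t) * ph x + t * ph y" by simp
  qed
  have "{a<..<b} \<subseteq> I"
  proof
    fix w assume "w \<in> {a<..<b}"
    then have "phi w \<le> max (phi a) (phi b)" "0 \<le> w"
      using adm_quasi[OF adm, of a w b "max (phi a) (phi b)"] assms by auto
    then show "w \<in> I" using assms unfolding I_def by (auto simp: max_def split: if_splits)
  qed
  then have mi: "m \<in> interior I" using assms
    by (meson greaterThanLessThan_iff interior_maximal interior_open open_greaterThanLessThan subset_iff)
  have mI: "m \<in> I" using mi interior_subset by blast
  define c where "c = Inf ((\<lambda>t. (ph m - ph t) / (m - t)) ` ({m<..} \<inter> I))"
  have "ereal (ph m + c * (s - m)) \<le> phi s" if "s \<ge> 0" for s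
  proof (cases "s \<in> I")
    case True
    then have "ph s \<ge> ph m + c * (s - m)"
      unfolding c_def by (rule convex_le_Inf_differential[OF conv mi])
    then show ?thesis using fin[OF True] by simp
  next
    case False
    then have "phi s = \<infinity>" using that unfolding I_def by (simp add: top.not_eq_extremum)
    then show ?thesis by simp
  qed
  then show ?thesis using fin[OF mI] unfolding ph_def by (intro exI[of _ c]) auto
qed

lemma jensen_set:
  assumes adm: "admissible_phi phi" and ps: "prob_space P" and B: "B \<in> sets P"
    and p: "measure P B > 0"
    and fm: "f \<in> borel_measurable P" and fnn: "\<And>w. f w \<ge> 0" and fi: "integrable P f"
    and fin: "(\<integral>\<^sup>+w. e2ennreal (phi (f w)) * indicator B w \<partial>P) \<noteq> \<infinity>"
  defines "m \<equiv> (\<integral>w. indicator B w * f w \<partial>P) / measure P B"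
  shows "\<exists>c r. phi m = ereal r \<and>
     (AE w in P. w \<in> B \<longrightarrow> ereal (r + c * (f w - m)) \<le> phi (f w))"
proof -
  interpret prob_space P by fact
  have pm[measurable]: "(\<lambda>w. phi (f w)) \<in> borel_measurable P"
    by (rule adm_meas_comp[OF adm fm fnn])
  have "AE w in P. e2ennreal (phi (f w)) * indicator B w \<noteq> \<infinity>"
    by (rule nn_integral_PInf_AE[OF _ fin]) (use B in measurable)
  then have AEfin: "AE w in P. w \<in> B \<longrightarrow> phi (f w) < \<infinity>"
    by eventually_elim (auto simp: e2ennreal_top_iff top.not_eq_extremum)
  have iB: "integrable P (\<lambda>w. indicator B w * f w)"
    using integrable_real_mult_indicator[OF B fi] by (simp add: mult.commute)
  have iBc: "integrable P (\<lambda>w. indicator B w * m)"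
    using integrable_real_mult_indicator[OF B, of "\<lambda>_. m"] by (simp add: mult.commute)
  have intB: "(\<integral>w. indicator B w * m \<partial>P) = (\<integral>w. indicator B w * f w \<partial>P)"
    using p B sets.sets_into_space[OF B] unfolding m_def by (simp add: integral_mult_left_zero Int_absorb2)
  have m0: "m \<ge> 0" unfolding m_def
    by (intro divide_nonneg_nonneg integral_nonneg_AE) (auto simp: fnn)
  show ?thesis
  proof (cases "\<exists>a b. 0 \<le> a \<and> a < m \<and> m < b \<and> phi a < \<infinity> \<and> phi b < \<infinity>")
    case True
    then obtain a b where "0 \<le> a" "a < m" "m < b" "phi a < \<infinity>" "phi b < \<infinity>" by blast
    from adm_support[OF adm this] obtain c where
      c: "phi m = ereal (real_of_ereal (phi m))"
         "\<forall>s\<ge>0. ereal (real_of_ereal (phi m) + c * (s - m)) \<le> phi s" by blast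
    show ?thesis using c fnn by (intro exI[of _ c] exI[of _ "real_of_ereal (phi m)"]) auto
  next
    case False
    have eqm: "AE w in P. w \<in> B \<longrightarrow> f w = m"
    proof (cases "\<forall>s. 0 \<le> s \<longrightarrow> phi s < \<infinity> \<longrightarrow> s \<le> m")
      case True
      then have le: "AE w in P. w \<in> B \<longrightarrow> f w \<le> m" using AEfin fnn by auto
      have "(\<integral>w. indicator B w * m - indicator B w * f w \<partial>P) = 0"
        using intB iB iBc by simp
      moreover have "AE w in P. 0 \<le> indicator B w * m - indicator B w * f w"
        using le by eventually_elim (auto simp: indicator_def)
      ultimately have "AE w in P. indicator B w * m - indicator B w * f w = 0"
        using integral_nonneg_eq_0_iff_AE[of P "\<lambda>w. indicator B w * m - indicator B w * f w"] iB iBc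
        by auto
      then show ?thesis by eventually_elim (auto simp: indicator_def)
    next
      case False2: False
      have "\<forall>s. 0 \<le> s \<longrightarrow> phi s < \<infinity> \<longrightarrow> m \<le> s"
      proof (rule ccontr)
        assume "\<not> ?thesis"
        then obtain a where "0 \<le> a" "phi a < \<infinity>" "a < m" by auto
        moreover obtain b where "0 \<le> b" "phi b < \<infinity>" "m < b" using False2 by auto
        ultimately show False using False by blast
      qed
      then have le: "AE w in P. w \<in> B \<longrightarrow> m \<le> f w" using AEfin fnn by auto
      have "(\<integral>w. indicator B w * f w - indicator B w * m \<partial>P) = 0"
        using intB iB iBc by simp
      moreover have "AE w in P. 0 \<le> indicator B w * f w - indicator B w * m"
        using le by eventually_elim (auto simp: indicator_def)
      ultimately have "AE w in P. indicator B w * f w - indicator B w * m = 0"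
        using integral_nonneg_eq_0_iff_AE[of P "\<lambda>w. indicator B w * f w - indicator B w * m"] iB iBc
        by auto
      then show ?thesis by eventually_elim (auto simp: indicator_def)
    qed
    have "(\<integral>\<^sup>+w. e2ennreal (phi (f w)) * indicator B w \<partial>P) =
          (\<integral>\<^sup>+w. e2ennreal (phi m) * indicator B w \<partial>P)"
      using eqm by (intro nn_integral_cong_AE) (auto simp: indicator_def)
    also have "\<dots> = e2ennreal (phi m) * emeasure P B"
      using B by (rule nn_integral_cmult_indicator)
    finally have "e2ennreal (phi m) * emeasure P B \<noteq> \<infinity>" using fin by simp
    moreover have "emeasure P B \<noteq> 0" using p B by (simp add: emeasure_eq_measure)
    ultimately have "e2ennreal (phi m) \<noteq> \<infinity>" by (auto simp: ennreal_mult_eq_top_iff)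
    then have "phi m \<noteq> \<infinity>" by (auto simp: e2ennreal_top_iff)
    moreover have "phi m \<noteq> -\<infinity>" using adm_nm[OF adm m0] .
    ultimately obtain r where r: "phi m = ereal r" by (cases "phi m") auto
    show ?thesis using eqm r by (intro exI[of _ 0] exI[of _ r]) (auto elim: AE_mp)
  qed
qed

lemma ptwise_key:
  assumes "ereal l \<le> u" "u \<noteq> -\<infinity>"
  shows "ennreal l + e2ennreal (- u) \<le> e2ennreal u + ennreal (- l)"
proof (cases u)
  case (real r)
  then have lr: "l \<le> r" using assms by simp
  have "ennreal l + ennreal (- r) \<le> ennreal r + ennreal (- l)"
  proof (cases "l \<ge> 0")
    case True
    then show ?thesis using lr by (simp add: ennreal_neg ennreal_leI)
  next
    case False
    show ?thesis
    proof (cases "r \<ge> 0")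
      case True
      then show ?thesis using False by (simp add: ennreal_neg add_increasing2)
    next
      case False2: False
      then show ?thesis using False lr by (simp add: ennreal_neg ennreal_leI)
    qed
  qed
  then show ?thesis using real by simp
next
  case PInf then show ?thesis by simp
next
  case MInf then show ?thesis using assms by simp
qed

lemma div_lower:
  assumes adm: "admissible_phi phi" and fm: "f \<in> borel_measurable P" and fnn: "\<And>w. f w \<ge> 0"
    and li: "integrable P l" and le: "AE w in P. ereal (l w) \<le> phi (f w)"
  shows "ereal (\<integral>w. l w \<partial>P) \<le> enn2ereal (\<integral>\<^sup>+w. e2ennreal (phi (f w)) \<partial>P)
            - enn2ereal (\<integral>\<^sup>+w. e2ennreal (- phi (f w)) \<partial>P)"
proof -
  have pm[measurable]: "(\<lambda>w. phi (f w)) \<in> borel_measurable P"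
    by (rule adm_meas_comp[OF adm fm fnn])
  have lm[measurable]: "l \<in> borel_measurable P" using li by auto
  define U where "U = (\<integral>\<^sup>+w. e2ennreal (phi (f w)) \<partial>P)"
  define V where "V = (\<integral>\<^sup>+w. e2ennreal (- phi (f w)) \<partial>P)"
  define Lp where "Lp = (\<integral>\<^sup>+w. ennreal (l w) \<partial>P)"
  define Ln where "Ln = (\<integral>\<^sup>+w. ennreal (- l w) \<partial>P)"
  have Lpf: "Lp \<noteq> top" and Lnf: "Ln \<noteq> top" using li unfolding Lp_def Ln_def by auto
  have il: "(\<integral>w. l w \<partial>P) = enn2real Lp - enn2real Ln"
    unfolding Lp_def Ln_def by (rule real_lebesgue_integral_def[OF li])
  have VL: "V \<le> Ln" unfolding V_def Ln_def
  proof (rule nn_integral_mono_AE)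
    show "AE w in P. e2ennreal (- phi (f w)) \<le> ennreal (- l w)"
      using le by eventually_elim (metis e2ennreal_ereal e2ennreal_mono ereal_minus_le_minus uminus_ereal.simps(1))
  qed
  have "(\<integral>\<^sup>+w. ennreal (l w) + e2ennreal (- phi (f w)) \<partial>P) \<le>
        (\<integral>\<^sup>+w. e2ennreal (phi (f w)) + ennreal (- l w) \<partial>P)"
  proof (rule nn_integral_mono_AE)
    show "AE w in P. ennreal (l w) + e2ennreal (- phi (f w)) \<le> e2ennreal (phi (f w)) + ennreal (- l w)"
      using le
    proof eventually_elim
      case (elim w)
      then show ?case by (rule ptwise_key) (rule adm_nm[OF adm fnn])
    qed
  qed
  then have key: "Lp + V \<le> U + Ln" unfolding Lp_def V_def U_def Ln_def
    by (subst (asm) (1 2) nn_integral_add) auto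
  show ?thesis
  proof (cases "U = top")
    case True then show ?thesis unfolding U_def[symmetric] V_def[symmetric] by simp
  next
    case False
    have Vf: "V \<noteq> top" using VL Lnf by (auto simp: top_unique)
    obtain u where u: "u \<ge> 0" "U = ennreal u" using False by (cases U) auto
    obtain v where v: "v \<ge> 0" "V = ennreal v" using Vf by (cases V) auto
    obtain a where a: "a \<ge> 0" "Lp = ennreal a" using Lpf by (cases Lp) auto
    obtain b where b: "b \<ge> 0" "Ln = ennreal b" using Lnf by (cases Ln) auto
    have "a + v \<le> u + b" using key u v a b by (simp del: ennreal_plus add: ennreal_plus[symmetric])
    then show ?thesis unfolding U_def[symmetric] V_def[symmetric] il using u v a b by simp
  qed
qed

lemma rn_facts:
  assumes ps: "prob_space P" and qs: "prob_space Q" and sq: "sets Q = sets P"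
    and ac: "absolutely_continuous P Q"
  shows "(\<lambda>w. enn2real (RN_deriv P Q w)) \<in> borel_measurable P"
    and "integrable P (\<lambda>w. enn2real (RN_deriv P Q w))"
    and "\<And>B. B \<in> sets P \<Longrightarrow> (\<integral>w. indicator B w * enn2real (RN_deriv P Q w) \<partial>P) = measure Q B"
proof -
  interpret P: prob_space P by fact
  interpret Q: prob_space Q by fact
  let ?f = "\<lambda>w. enn2real (RN_deriv P Q w)"
  have dens: "density P (RN_deriv P Q) = Q" by (rule P.density_RN_deriv[OF ac sq])
  have fin: "AE w in P. RN_deriv P Q w \<noteq> \<infinity>"
    by (rule P.RN_deriv_finite[OF Q.sigma_finite_measure_axioms ac sq])
  show fm: "?f \<in> borel_measurable P" by measurable
  have em: "emeasure Q B = (\<integral>\<^sup>+w. ennreal (indicator B w * ?f w) \<partial>P)" if B: "B \<in> sets P" for B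
  proof -
    have "emeasure Q B = emeasure (density P (RN_deriv P Q)) B" by (simp only: dens)
    also have "\<dots> = (\<integral>\<^sup>+w. RN_deriv P Q w * indicator B w \<partial>P)"
      by (rule emeasure_density[OF borel_measurable_RN_deriv B])
    also have "\<dots> = (\<integral>\<^sup>+w. ennreal (indicator B w * ?f w) \<partial>P)"
    proof (rule nn_integral_cong_AE)
      show "AE w in P. RN_deriv P Q w * indicator B w = ennreal (indicator B w * ?f w)"
        using fin
      proof eventually_elim
        case (elim w)
        then show ?case by (cases "RN_deriv P Q w") (auto simp: indicator_def)
      qed
    qed
    finally show ?thesis .
  qed
  have "(\<integral>\<^sup>+w. ennreal (?f w) \<partial>P) = emeasure Q (space P)"
    unfolding em[OF sets.top] by (rule nn_integral_cong) (simp add: indicator_def)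
  also have "\<dots> = 1" using sq Q.emeasure_space_1 by (metis sets_eq_imp_space_eq)
  finally have "(\<integral>\<^sup>+w. ennreal (?f w) \<partial>P) < \<infinity>" by simp
  then show fi: "integrable P ?f"
    by (intro integrableI_nonneg fm AE_I2 enn2real_nonneg)
  fix B assume B: "B \<in> sets P"
  have "(\<integral>w. indicator B w * ?f w \<partial>P) = enn2real (\<integral>\<^sup>+w. ennreal (indicator B w * ?f w) \<partial>P)"
    using B fm by (intro integral_eq_nn_integral AE_I2 borel_measurable_times borel_measurable_indicator)
       (auto simp: indicator_def)
  also have "\<dots> = measure Q B" using em[OF B] by (simp add: measure_def)
  finally show "(\<integral>w. indicator B w * ?f w \<partial>P) = measure Q B" .
qed

lemma ball_le:
  assumes adm: "admissible_phi phi" and ps: "prob_space P" and A: "A \<in> sets P"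
    and x: "measure P A = x" "0 < x" "x < 1"
    and Q: "Q \<in> phi_ball phi P \<delta>" and t: "measure Q A = t"
  shows "ereal x * phi (t / x) + ereal (1 - x) * phi ((1 - t) / (1 - x)) \<le> ereal \<delta>"
proof -
  interpret P: prob_space P by fact
  from Q have sq: "sets Q = sets P" and qs: "prob_space Q" and ac: "absolutely_continuous P Q"
    and D: "phi_div phi Q P \<le> ereal \<delta>" unfolding phi_ball_def by auto
  interpret Q: prob_space Q by fact
  define f where "f = (\<lambda>w. enn2real (RN_deriv P Q w))"
  have fm: "f \<in> borel_measurable P" and fi: "integrable P f"
    and fint: "\<And>B. B \<in> sets P \<Longrightarrow> (\<integral>w. indicator B w * f w \<partial>P) = measure Q B"
    using rn_facts[OF ps qs sq ac] unfolding f_def by auto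
  have fnn: "\<And>w. f w \<ge> 0" unfolding f_def by simp
  define U where "U = (\<integral>\<^sup>+w. e2ennreal (phi (f w)) \<partial>P)"
  define V where "V = (\<integral>\<^sup>+w. e2ennreal (- phi (f w)) \<partial>P)"
  have Deq: "phi_div phi Q P = enn2ereal U - enn2ereal V"
    unfolding phi_div_def U_def V_def f_def by simp
  have Uf: "U \<noteq> top"
  proof
    assume "U = top"
    then have "phi_div phi Q P = \<infinity>" unfolding Deq by simp
    then show False using D by simp
  qed
  define Ac where "Ac = space P - A"
  have Ac: "Ac \<in> sets P" unfolding Ac_def using A by auto
  have xAc: "measure P Ac = 1 - x" unfolding Ac_def using P.prob_compl[OF A] x by simp
  have tAc: "measure Q Ac = 1 - t" unfolding Ac_def using Q.prob_compl[of A] A sq t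
    by (metis sets_eq_imp_space_eq)
  have finB: "(\<integral>\<^sup>+w. e2ennreal (phi (f w)) * indicator B w \<partial>P) \<noteq> \<infinity>" for B
  proof -
    have "(\<integral>\<^sup>+w. e2ennreal (phi (f w)) * indicator B w \<partial>P) \<le> U"
      unfolding U_def by (intro nn_integral_mono) (simp add: indicator_def)
    then show ?thesis using Uf by (auto simp: top_unique)
  qed
  have mA: "(\<integral>w. indicator A w * f w \<partial>P) / measure P A = t / x" using fint[OF A] t x by simp
  have mAc: "(\<integral>w. indicator Ac w * f w \<partial>P) / measure P Ac = (1 - t) / (1 - x)"
    using fint[OF Ac] tAc xAc by simp
  obtain c1 r1 where r1: "phi (t / x) = ereal r1"
    and J1: "AE w in P. w \<in> A \<longrightarrow> ereal (r1 + c1 * (f w - t / x)) \<le> phi (f w)"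
    using jensen_set[OF adm ps A _ fm fnn fi finB] x unfolding mA by auto
  obtain c2 r2 where r2: "phi ((1 - t) / (1 - x)) = ereal r2"
    and J2: "AE w in P. w \<in> Ac \<longrightarrow> ereal (r2 + c2 * (f w - (1 - t) / (1 - x))) \<le> phi (f w)"
    using jensen_set[OF adm ps Ac _ fm fnn fi finB] x xAc unfolding mAc by auto
  define a1 where "a1 = r1 - c1 * (t / x)"
  define a2 where "a2 = r2 - c2 * ((1 - t) / (1 - x))"
  define l where "l = (\<lambda>w. (a1 * indicator A w + c1 * (indicator A w * f w)) +
                          (a2 * indicator Ac w + c2 * (indicator Ac w * f w)))"
  have i1: "integrable P (\<lambda>w. a1 * indicator A w)"
    using integrable_real_mult_indicator[OF A P.integrable_const[of a1]] .
  have i2: "integrable P (\<lambda>w. c1 * (indicator A w * f w))"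
    using integrable_real_mult_indicator[OF A fi] by (intro integrable_mult_right) (simp add: mult.commute)
  have i3: "integrable P (\<lambda>w. a2 * indicator Ac w)"
    using integrable_real_mult_indicator[OF Ac P.integrable_const[of a2]] .
  have i4: "integrable P (\<lambda>w. c2 * (indicator Ac w * f w))"
    using integrable_real_mult_indicator[OF Ac fi] by (intro integrable_mult_right) (simp add: mult.commute)
  have li: "integrable P l" unfolding l_def by (intro Bochner_Integration.integrable_add i1 i2 i3 i4)
  have "(\<integral>w. l w \<partial>P) = (\<integral>w. a1 * indicator A w \<partial>P) + (\<integral>w. c1 * (indicator A w * f w) \<partial>P)
      + ((\<integral>w. a2 * indicator Ac w \<partial>P) + (\<integral>w. c2 * (indicator Ac w * f w) \<partial>P))"
    unfolding l_def using i1 i2 i3 i4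
    by (simp add: Bochner_Integration.integral_add Bochner_Integration.integrable_add)
  also have "\<dots> = a1 * x + c1 * t + (a2 * (1 - x) + c2 * (1 - t))"
    using fint[OF A] fint[OF Ac] t tAc x xAc sets.sets_into_space[OF A] sets.sets_into_space[OF Ac]
    by (simp add: Int_absorb2)
  also have "\<dots> = x * r1 + (1 - x) * r2"
    unfolding a1_def a2_def using x by (simp add: field_simps)
  finally have il: "(\<integral>w. l w \<partial>P) = x * r1 + (1 - x) * r2" .
  have le: "AE w in P. ereal (l w) \<le> phi (f w)"
    using J1 J2 AE_space
  proof eventually_elim
    case (elim w)
    show ?case
    proof (cases "w \<in> A")
      case True
      then have "w \<notin> Ac" unfolding Ac_def by auto
      then have "l w = r1 + c1 * (f w - t / x)" using True unfolding l_def a1_def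
        by (simp add: algebra_simps)
      then show ?thesis using elim True by simp
    next
      case False
      then have "w \<in> Ac" unfolding Ac_def using elim by auto
      then have "l w = r2 + c2 * (f w - (1 - t) / (1 - x))" using False unfolding l_def a2_def
        by (simp add: algebra_simps)
      then show ?thesis using elim \<open>w \<in> Ac\<close> by simp
    qed
  qed
  have "ereal (\<integral>w. l w \<partial>P) \<le> phi_div phi Q P"
    unfolding Deq U_def V_def by (rule div_lower[OF adm fm fnn li le])
  then have "ereal (x * r1 + (1 - x) * r2) \<le> ereal \<delta>" using D il by (metis order_trans)
  then show ?thesis using r1 r2 by simp
qed

lemma nn_two:
  assumes ps: "prob_space P" and A: "A \<in> sets P" and x: "measure P A = x"
    and g: "AE w in P. g w = ennreal (if w \<in> A then a else b)"
  shows "enn2ereal (\<integral>\<^sup>+w. g w \<partial>P) = ereal (max 0 a * x + max 0 b * (1 - x))"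
proof -
  interpret P: prob_space P by fact
  define Ac where "Ac = space P - A"
  have Ac: "Ac \<in> sets P" unfolding Ac_def using A by auto
  have xAc: "measure P Ac = 1 - x" unfolding Ac_def using P.prob_compl[OF A] x by simp
  have x0: "0 \<le> x" "x \<le> 1" using x by auto
  have "(\<integral>\<^sup>+w. g w \<partial>P) = (\<integral>\<^sup>+w. ennreal (max 0 a) * indicator A w + ennreal (max 0 b) * indicator Ac w \<partial>P)"
  proof (rule nn_integral_cong_AE)
    show "AE w in P. g w = ennreal (max 0 a) * indicator A w + ennreal (max 0 b) * indicator Ac w"
      using g AE_space
    proof eventually_elim
      case (elim w)
      then show ?case unfolding Ac_def by (auto simp: indicator_def ennreal_max_0)
    qed
  qed
  also have "\<dots> = ennreal (max 0 a) * emeasure P A + ennreal (max 0 b) * emeasure P Ac"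
    using A Ac by (simp add: nn_integral_add nn_integral_cmult_indicator)
  also have "\<dots> = ennreal (max 0 a * x + max 0 b * (1 - x))"
  proof -
    have "ennreal (max 0 a * x + max 0 b * (1 - x)) = ennreal (max 0 a * x) + ennreal (max 0 b * (1 - x))"
      using x0 by (intro ennreal_plus) auto
    also have "\<dots> = ennreal (max 0 a) * ennreal x + ennreal (max 0 b) * ennreal (1 - x)"
      using x0 by (simp add: ennreal_mult)
    finally show ?thesis using x xAc by (simp add: P.emeasure_eq_measure)
  qed
  finally have "(\<integral>\<^sup>+w. g w \<partial>P) = ennreal (max 0 a * x + max 0 b * (1 - x))" .
  moreover have "0 \<le> max 0 a * x + max 0 b * (1 - x)" using x0 by auto
  ultimately show ?thesis by simp
qed

lemma P_in_ball:
  assumes adm: "admissible_phi phi" and ps: "prob_space P" and d: "\<delta> > 0"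
  shows "P \<in> phi_ball phi P \<delta>"
proof -
  interpret P: prob_space P by fact
  have "AE w in P. 1 = RN_deriv P P w"
    using P.RN_deriv_unique[of "\<lambda>_. 1" P] density_1[of P] by simp
  then have ae: "AE w in P. RN_deriv P P w = 1" by eventually_elim (rule sym)
  have e1: "(\<integral>\<^sup>+w. e2ennreal (phi (enn2real (RN_deriv P P w))) \<partial>P) = 0"
    using ae by (intro nn_integral_zero', eventually_elim) (simp add: adm_one[OF adm])
  have e2: "(\<integral>\<^sup>+w. e2ennreal (- phi (enn2real (RN_deriv P P w))) \<partial>P) = 0"
    using ae by (intro nn_integral_zero', eventually_elim) (simp add: adm_one[OF adm])
  have "phi_div phi P P = 0" unfolding phi_div_def e1 e2 by simp
  then show ?thesis unfolding phi_ball_def using ps d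
    by (auto simp: absolutely_continuous_def)
qed

lemma ball_ge:
  assumes adm: "admissible_phi phi" and ps: "prob_space P" and A: "A \<in> sets P"
    and x: "measure P A = x" "0 < x" "x < 1" and t: "0 \<le> t" "t \<le> 1"
    and F: "ereal x * phi (t / x) + ereal (1 - x) * phi ((1 - t) / (1 - x)) \<le> ereal \<delta>"
  shows "\<exists>Q\<in>phi_ball phi P \<delta>. measure Q A = t"
proof -
  interpret P: prob_space P by fact
  define m1 where "m1 = t / x"
  define m2 where "m2 = (1 - t) / (1 - x)"
  have m0: "m1 \<ge> 0" "m2 \<ge> 0" unfolding m1_def m2_def using x t by auto
  have F': "ereal x * phi m1 + ereal (1 - x) * phi m2 \<le> ereal \<delta>"
    using F unfolding m1_def m2_def .
  have nm: "phi m1 \<noteq> -\<infinity>" "phi m2 \<noteq> -\<infinity>" using adm_nm[OF adm] m0 by auto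
  have "phi m1 \<noteq> \<infinity>"
  proof
    assume "phi m1 = \<infinity>"
    then have eq: "ereal x * phi m1 + ereal (1 - x) * phi m2 = \<infinity>"
      using x nm by (cases "phi m2") auto
    have "(\<infinity>::ereal) \<le> ereal \<delta>" using F'[unfolded eq] .
    then show False by simp
  qed
  then obtain r1 where r1: "phi m1 = ereal r1" using nm by (cases "phi m1") auto
  have "phi m2 \<noteq> \<infinity>"
  proof
    assume "phi m2 = \<infinity>"
    then have eq: "ereal x * phi m1 + ereal (1 - x) * phi m2 = \<infinity>"
      using x r1 by simp
    have "(\<infinity>::ereal) \<le> ereal \<delta>" using F'[unfolded eq] .
    then show False by simp
  qed
  then obtain r2 where r2: "phi m2 = ereal r2" using nm by (cases "phi m2") auto
  define h where "h = (\<lambda>w. ennreal (if w \<in> A then m1 else m2))"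
  have hm: "h \<in> borel_measurable P" unfolding h_def using A by measurable
  define Q where "Q = density P h"
  have sq: "sets Q = sets P" unfolding Q_def by simp
  have emA: "emeasure Q A = ennreal t"
  proof -
    have "emeasure Q A = (\<integral>\<^sup>+w. h w * indicator A w \<partial>P)"
      unfolding Q_def by (rule emeasure_density[OF hm A])
    also have "\<dots> = (\<integral>\<^sup>+w. ennreal m1 * indicator A w \<partial>P)"
      unfolding h_def by (intro nn_integral_cong) (simp add: indicator_def)
    also have "\<dots> = ennreal m1 * emeasure P A" using A by (rule nn_integral_cmult_indicator)
    also have "\<dots> = ennreal t" using x m0 unfolding m1_def
      by (simp add: P.emeasure_eq_measure ennreal_mult''[symmetric])
    finally show ?thesis .
  qed
  have emS: "emeasure Q (space Q) = 1"
  proof -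
    have "emeasure Q (space Q) = (\<integral>\<^sup>+w. h w * indicator (space P) w \<partial>P)"
      unfolding Q_def space_density by (rule emeasure_density[OF hm sets.top])
    also have "\<dots> = (\<integral>\<^sup>+w. h w \<partial>P)"
      by (intro nn_integral_cong) (simp add: indicator_def)
    finally have "enn2ereal (emeasure Q (space Q)) = ereal (max 0 m1 * x + max 0 m2 * (1 - x))"
      using nn_two[OF ps A x(1), of h m1 m2] unfolding h_def by simp
    also have "\<dots> = 1"
    proof -
      have "m1 * x = t" "m2 * (1 - x) = 1 - t" unfolding m1_def m2_def using x by auto
      then show ?thesis using m0 by simp
    qed
    finally have "enn2ereal (emeasure Q (space Q)) = ereal 1" by simp
    then show ?thesis by (metis e2ennreal_enn2ereal e2ennreal_ereal ennreal_1)
  qed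
  have qs: "prob_space Q" using emS by (rule prob_spaceI)
  have ac: "absolutely_continuous P Q" unfolding Q_def by (rule absolutely_continuousI_density[OF hm])
  have rn: "AE w in P. h w = RN_deriv P Q w"
    unfolding Q_def by (rule P.RN_deriv_unique[OF hm refl])
  have e1: "enn2ereal (\<integral>\<^sup>+w. e2ennreal (phi (enn2real (RN_deriv P Q w))) \<partial>P)
            = ereal (max 0 r1 * x + max 0 r2 * (1 - x))"
  proof (rule nn_two[OF ps A x(1)])
    show "AE w in P. e2ennreal (phi (enn2real (RN_deriv P Q w))) = ennreal (if w \<in> A then r1 else r2)"
      using rn
    proof eventually_elim
      case (elim w)
      then have "RN_deriv P Q w = h w" by simp
      then show ?case using m0 by (cases "w \<in> A") (simp_all add: h_def r1 r2)
    qed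
  qed
  have e2: "enn2ereal (\<integral>\<^sup>+w. e2ennreal (- phi (enn2real (RN_deriv P Q w))) \<partial>P)
            = ereal (max 0 (-r1) * x + max 0 (-r2) * (1 - x))"
  proof (rule nn_two[OF ps A x(1)])
    show "AE w in P. e2ennreal (- phi (enn2real (RN_deriv P Q w))) = ennreal (if w \<in> A then -r1 else -r2)"
      using rn
    proof eventually_elim
      case (elim w)
      then have "RN_deriv P Q w = h w" by simp
      then show ?case using m0 by (cases "w \<in> A") (simp_all add: h_def r1 r2)
    qed
  qed
  have "phi_div phi Q P = ereal (x * r1 + (1 - x) * r2)"
  proof -
    have mm: "max 0 r - max 0 (-r) = r" for r :: real by auto
    have "max 0 r1 * x + max 0 r2 * (1 - x) - (max 0 (-r1) * x + max 0 (-r2) * (1 - x))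
        = (max 0 r1 - max 0 (-r1)) * x + (max 0 r2 - max 0 (-r2)) * (1 - x)"
      by (simp add: algebra_simps)
    also have "\<dots> = x * r1 + (1 - x) * r2" unfolding mm by simp
    finally show ?thesis unfolding phi_div_def e1 e2 by simp
  qed
  also have "\<dots> \<le> ereal \<delta>" using F' r1 r2 by simp
  finally have "Q \<in> phi_ball phi P \<delta>" unfolding phi_ball_def using sq qs ac by auto
  moreover have "measure Q A = t" using emA t by (simp add: measure_def)
  ultimately show ?thesis by blast
qed

lemma part1:
  assumes ps: "prob_space P" and d: "\<delta> > 0" and adm: "admissible_phi phi" and A: "A \<in> sets P"
  shows "upper_prob phi P \<delta> A = g_fun phi \<delta> (measure P A)"
proof -
  interpret P: prob_space P by fact
  define M where "M = (\<lambda>Q. measure Q A) ` phi_ball phi P \<delta>"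
  have up: "upper_prob phi P \<delta> A = Sup M" unfolding upper_prob_def M_def ..
  have Pb: "P \<in> phi_ball phi P \<delta>" by (rule P_in_ball[OF adm ps d])
  have Mne: "M \<noteq> {}" using Pb unfolding M_def by auto
  have Mle: "m \<le> 1" if "m \<in> M" for m
    using that unfolding M_def phi_ball_def by (auto intro: prob_space.prob_le_1)
  have Mbdd: "bdd_above M" using Mle by (intro bdd_aboveI[of _ 1]) auto
  define x where "x = measure P A"
  have x01: "0 \<le> x" "x \<le> 1" unfolding x_def by auto
  show ?thesis
  proof (cases "x = 0")
    case True
    have "measure Q A = 0" if Q: "Q \<in> phi_ball phi P \<delta>" for Q
    proof -
      from Q have sq: "sets Q = sets P" and ac: "absolutely_continuous P Q"
        unfolding phi_ball_def by auto
      have "A \<in> null_sets P" using A True unfolding x_def by (simp add: null_sets_def P.emeasure_eq_measure)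
      then have "A \<in> null_sets Q" using ac unfolding absolutely_continuous_def by auto
      then show ?thesis by (simp add: measure_def null_sets_def)
    qed
    then have "M = {0}" using Mne unfolding M_def by auto
    then show ?thesis using up True unfolding x_def g_fun_def by simp
  next
    case x0: False
    show ?thesis
    proof (cases "x = 1")
      case True
      have "measure Q A = 1" if Q: "Q \<in> phi_ball phi P \<delta>" for Q
      proof -
        from Q have sq: "sets Q = sets P" and ac: "absolutely_continuous P Q" and qs: "prob_space Q"
          unfolding phi_ball_def by auto
        interpret Q: prob_space Q by fact
        have "measure P (space P - A) = 0" using P.prob_compl[OF A] True unfolding x_def by simp
        then have "space P - A \<in> null_sets P" using A by (simp add: null_sets_def P.emeasure_eq_measure)
        then have "space P - A \<in> null_sets Q" using ac unfolding absolutely_continuous_def by auto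
        moreover have "space Q = space P" using sq by (rule sets_eq_imp_space_eq)
        ultimately have "measure Q (space Q - A) = 0" by (simp add: measure_def null_sets_def)
        moreover have "measure Q (space Q - A) = 1 - measure Q A"
          using Q.prob_compl[of A] A sq by simp
        ultimately show ?thesis by simp
      qed
      then have "M = {1}" using Mne unfolding M_def by auto
      then show ?thesis using up True unfolding x_def g_fun_def by simp
    next
      case x1: False
      have x: "0 < x" "x < 1" using x0 x1 x01 by auto
      define S where "S = {t \<in> {x..1}. ereal x * phi (t / x) + ereal (1 - x) * phi ((1 - t) / (1 - x))
                         \<le> ereal \<delta>}"
      have g: "g_fun phi \<delta> x = Sup S" unfolding g_fun_def S_def using x0 x1 by simp
      have xS: "x \<in> S" unfolding S_def using x d by (simp add: adm_one[OF adm])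
      have Sne: "S \<noteq> {}" using xS by auto
      have Sbdd: "bdd_above S" unfolding S_def by (auto intro: bdd_aboveI[of _ 1])
      have "Sup M \<le> Sup S"
      proof (rule cSup_least[OF Mne])
        fix m assume "m \<in> M"
        then obtain Q where Q: "Q \<in> phi_ball phi P \<delta>" and m: "m = measure Q A" unfolding M_def by auto
        show "m \<le> Sup S"
        proof (cases "m \<le> x")
          case True
          then show ?thesis using cSup_upper[OF xS Sbdd] by linarith
        next
          case False
          have "m \<le> 1" using Mle \<open>m \<in> M\<close> by auto
          moreover have "ereal x * phi (m / x) + ereal (1 - x) * phi ((1 - m) / (1 - x)) \<le> ereal \<delta>"
            using ball_le[OF adm ps A x_def[symmetric] x Q m[symmetric]] .
          ultimately have "m \<in> S" using False unfolding S_def by auto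
          then show ?thesis using cSup_upper[OF _ Sbdd] by auto
        qed
      qed
      moreover have "Sup S \<le> Sup M"
      proof (rule cSup_least[OF Sne])
        fix t assume "t \<in> S"
        then have t: "x \<le> t" "t \<le> 1"
          and F: "ereal x * phi (t / x) + ereal (1 - x) * phi ((1 - t) / (1 - x)) \<le> ereal \<delta>"
          unfolding S_def by auto
        obtain Q where "Q \<in> phi_ball phi P \<delta>" "measure Q A = t"
          using ball_ge[OF adm ps A x_def[symmetric] x _ t(2) F] t x by auto
        then have "t \<in> M" unfolding M_def by force
        then show "t \<le> Sup M" using cSup_upper[OF _ Mbdd] by auto
      qed
      ultimately show ?thesis using up g unfolding x_def by simp
    qed
  qed
qed

locale rphi =
  fixes phi :: "real \<Rightarrow> ereal"
  assumes adm: "admissible_phi phi"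
    and finv: "\<forall>x\<ge>0. phi x \<noteq> \<infinity>"
    and sc: "strictly_convex_ext phi"
    and sl: "((\<lambda>x. phi x / ereal x) \<longlongrightarrow> \<infinity>) at_top"
begin

definition ph :: "real \<Rightarrow> real" where "ph s = real_of_ereal (phi s)"

lemma phe: "s \<ge> 0 \<Longrightarrow> phi s = ereal (ph s)"
  unfolding ph_def using finv adm_nm[OF adm, of s] by (cases "phi s") auto

lemma ph1: "ph 1 = 0"
  unfolding ph_def using adm_one[OF adm] by simp

lemma phconv:
  assumes "x \<ge> 0" "y \<ge> 0" "0 \<le> t" "t \<le> 1"
  shows "ph (t * x + (1 - t) * y) \<le> t * ph x + (1 - t) * ph y"
proof -
  have "t * x + (1 - t) * y \<ge> 0" using assms by auto
  then show ?thesis using adm_conv[OF adm assms] phe assms by simp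
qed

lemma phsc:
  assumes "x \<ge> 0" "y \<ge> 0" "x \<noteq> y" "0 < t" "t < 1"
  shows "ph (t * x + (1 - t) * y) < t * ph x + (1 - t) * ph y"
proof -
  have "t * x + (1 - t) * y \<ge> 0" using assms by auto
  moreover have "phi (t * x + (1 - t) * y) < ereal t * phi x + ereal (1 - t) * phi y"
    using sc assms unfolding strictly_convex_ext_def by auto
  ultimately show ?thesis using phe assms by simp
qed

lemma phcont: "continuous_on {0..} ph"
proof -
  have cv: "convex_on {0<..} ph"
  proof (rule convex_onI)
    fix t x y :: real assume "0 < t" "t < 1" "x \<in> {0<..}" "y \<in> {0<..}"
    then show "ph ((1 - t) *\<^sub>R x + t *\<^sub>R y) \<le> (1 - t) * ph x + t * ph y"
      using phconv[of x y "1 - t"] by simp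
  qed (simp add: convex_real_interval)
  then have c1: "continuous_on {0<..} ph" by (intro convex_on_continuous) auto
  have "((\<lambda>s. ereal (ph s)) \<longlongrightarrow> ereal (ph 0)) (at_right 0)"
  proof -
    have "(phi \<longlongrightarrow> phi 0) (at_right 0)" using adm unfolding admissible_phi_def by auto
    moreover have "eventually (\<lambda>s. phi s = ereal (ph s)) (at_right (0::real))"
      unfolding eventually_at_right_field by (auto intro!: exI[of _ 1] phe)
    ultimately show ?thesis using phe[of 0] by (simp add: tendsto_cong)
  qed
  then have r0: "(ph \<longlongrightarrow> ph 0) (at_right 0)" by (simp add: lim_ereal)
  have "at (0::real) within {0..} = at_right 0"
  proof -
    have "{0::real..} - {0} = {0<..} - {0}" by auto
    then show ?thesis unfolding at_within_def by simp
  qed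
  then have "continuous (at 0 within {0..}) ph" using r0 unfolding continuous_within by simp
  moreover have "continuous (at x within {0..}) ph" if "x > 0" for x
  proof -
    have "isCont ph x" using c1 that
      by (simp add: continuous_on_eq_continuous_at)
    then show ?thesis by (rule continuous_at_imp_continuous_within)
  qed
  ultimately show ?thesis unfolding continuous_on_eq_continuous_within
    by (metis atLeast_iff less_eq_real_def)
qed

lemma phsl: "\<exists>N. \<forall>u\<ge>N. ph u \<ge> R * u"
proof -
  have "eventually (\<lambda>x. ereal R < phi x / ereal x) at_top" using sl unfolding tendsto_PInfty by auto
  moreover have "eventually (\<lambda>x. x > (0::real)) at_top" by simp
  ultimately have "eventually (\<lambda>x. ereal R < phi x / ereal x \<and> x > 0) at_top" by eventually_elim auto
  then obtain N where N: "\<And>u. u \<ge> N \<Longrightarrow> ereal R < phi u / ereal u \<and> u > 0"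
    unfolding eventually_at_top_linorder by auto
  have "ph u \<ge> R * u" if "u \<ge> N" for u
  proof -
    from N[OF that] have u: "u > 0" "ereal R < phi u / ereal u" by auto
    then have "ereal R < ereal (ph u / u)" using phe[of u] by simp
    then have "R < ph u / u" by simp
    then show ?thesis using u by (simp add: field_simps)
  qed
  then show ?thesis by blast
qed

lemma phlb: "\<exists>K\<ge>0. \<forall>s\<in>{0..1}. ph s \<ge> - K"
proof -
  have "continuous_on {0..1} ph" using phcont by (rule continuous_on_subset) auto
  then obtain s0 where "s0 \<in> {0..1}" "\<forall>y\<in>{0..1}. ph s0 \<le> ph y"
    using continuous_attains_inf[of "{0..1::real}" ph] by auto
  then show ?thesis by (intro exI[of _ "\<bar>ph s0\<bar>"]) auto
qed

end

lemma lin_comb: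
  fixes u v w l :: real
  assumes "u \<noteq> v" "l = (v - w) / (v - u)"
  shows "l * u + (1 - l) * v = w"
proof -
  have tv: "l * (v - u) = v - w" using assms by simp
  have tv2: "l * v - l * u = v - w" using tv by (simp add: right_diff_distrib)
  have "l * u + (1 - l) * v = l * u + v - l * v" by (simp add: left_diff_distrib)
  then show ?thesis using tv2 by linarith
qed

context rphi begin

definition F :: "real \<Rightarrow> real \<Rightarrow> real" where
  "F x t = x * ph (t / x) + (1 - x) * ph ((1 - t) / (1 - x))"

lemma Fe:
  assumes "0 < x" "x < 1" "0 \<le> t" "t \<le> 1"
  shows "ereal x * phi (t / x) + ereal (1 - x) * phi ((1 - t) / (1 - x)) = ereal (F x t)"
  using assms phe[of "t / x"] phe[of "(1 - t) / (1 - x)"] unfolding F_def by simp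

lemma F0: "0 < x \<Longrightarrow> x < 1 \<Longrightarrow> F x x = 0"
  unfolding F_def using ph1 by simp

lemma F11: "F 1 1 = 0"
  unfolding F_def using ph1 by simp

lemma Fpos:
  assumes "0 < x" "x < 1" "0 \<le> t" "t \<le> 1" "t \<noteq> x"
  shows "F x t > 0"
proof -
  have ne: "t / x \<noteq> (1 - t) / (1 - x)"
  proof
    assume "t / x = (1 - t) / (1 - x)"
    then have "t * (1 - x) = x * (1 - t)" using assms by (simp add: field_simps)
    then show False using assms by (simp add: algebra_simps)
  qed
  have "ph (x * (t / x) + (1 - x) * ((1 - t) / (1 - x))) < x * ph (t / x) + (1 - x) * ph ((1 - t) / (1 - x))"
    using phsc[OF _ _ ne, of x] assms by auto
  moreover have "x * (t / x) + (1 - x) * ((1 - t) / (1 - x)) = 1" using assms by simp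
  ultimately show ?thesis unfolding F_def using ph1 by simp
qed

lemma Fconv_t:
  assumes "0 < x" "x < 1" "0 \<le> a" "a \<le> 1" "0 \<le> b" "b \<le> 1" "0 \<le> l" "l \<le> 1"
  shows "F x (l * a + (1 - l) * b) \<le> l * F x a + (1 - l) * F x b"
proof -
  have e1: "(l * a + (1 - l) * b) / x = l * (a / x) + (1 - l) * (b / x)" by (simp add: add_divide_distrib)
  have "1 - (l * a + (1 - l) * b) = l * (1 - a) + (1 - l) * (1 - b)" by (simp add: algebra_simps)
  then have e2: "(1 - (l * a + (1 - l) * b)) / (1 - x) = l * ((1 - a) / (1 - x)) + (1 - l) * ((1 - b) / (1 - x))"
    by (simp add: add_divide_distrib)
  have i1: "ph ((l * a + (1 - l) * b) / x) \<le> l * ph (a / x) + (1 - l) * ph (b / x)"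
    unfolding e1 using assms by (intro phconv) auto
  have i2: "ph ((1 - (l * a + (1 - l) * b)) / (1 - x)) \<le> l * ph ((1 - a) / (1 - x)) + (1 - l) * ph ((1 - b) / (1 - x))"
    unfolding e2 using assms by (intro phconv) auto
  have "F x (l * a + (1 - l) * b) \<le> x * (l * ph (a / x) + (1 - l) * ph (b / x))
      + (1 - x) * (l * ph ((1 - a) / (1 - x)) + (1 - l) * ph ((1 - b) / (1 - x)))"
    unfolding F_def using assms i1 i2 by (intro add_mono mult_left_mono) auto
  also have "\<dots> = l * F x a + (1 - l) * F x b" unfolding F_def by (simp add: algebra_simps)
  finally show ?thesis .
qed

lemma Fmono_t:
  assumes "0 < x" "x < 1" "x \<le> a" "a < b" "b \<le> 1"
  shows "F x a < F x b"
proof (cases "a = x")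
  case True
  then show ?thesis using F0 Fpos assms by auto
next
  case False
  define l where "l = (b - a) / (b - x)"
  have l: "0 < l" "l < 1" using assms False unfolding l_def by (auto simp: field_simps)
  have "l * x + (1 - l) * b = a" using assms False by (intro lin_comb[OF _ l_def]) auto
  then have "F x a \<le> l * F x x + (1 - l) * F x b"
    using Fconv_t[of x x b l] assms l by auto
  also have "\<dots> = (1 - l) * F x b" using F0 assms by simp
  also have "\<dots> < F x b" using l Fpos[of x b] assms by auto
  finally show ?thesis .
qed

lemma Fcont_t:
  assumes "0 < x" "x < 1"
  shows "continuous_on {0..1} (F x)"
proof -
  have c1: "continuous_on {0..1} (\<lambda>t. ph (t / x))"
    using assms by (intro continuous_on_compose2[OF phcont] continuous_intros) auto
  have c2: "continuous_on {0..1} (\<lambda>t. ph ((1 - t) / (1 - x)))"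
    using assms by (intro continuous_on_compose2[OF phcont] continuous_intros) auto
  show ?thesis unfolding F_def by (intro continuous_intros c1 c2)
qed

lemma persp:
  assumes "y1 > 0" "y2 \<ge> 0" "s \<ge> 0" "y2 > 0 \<or> s = 0" "0 \<le> l" "l \<le> 1"
  shows "(l * y1 + (1 - l) * y2) * ph (s / (l * y1 + (1 - l) * y2))
           \<le> l * y1 * ph (s / y1) + (1 - l) * y2 * ph (s / y2)"
proof (cases "l = 0")
  case True then show ?thesis by simp
next
  case False
  then have lp: "l > 0" using assms by auto
  define y where "y = l * y1 + (1 - l) * y2"
  have yp: "y > 0" unfolding y_def using lp assms by (simp add: add_pos_nonneg)
  show ?thesis
  proof (cases "s = 0")
    case True
    then show ?thesis by (simp add: algebra_simps)
  next
    case False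
    then have y2: "y2 > 0" using assms by auto
    define mu where "mu = l * y1 / y"
    have "l * y1 \<le> y" unfolding y_def using assms by simp
    then have mu: "0 \<le> mu" "mu \<le> 1" unfolding mu_def using yp assms lp
      by auto
    have ymu: "y * mu = l * y1" unfolding mu_def using yp by simp
    have "y - l * y1 = (1 - l) * y2" by (simp add: y_def)
    then have ymu2: "y * (1 - mu) = (1 - l) * y2" using ymu by (simp add: right_diff_distrib)
    have q1: "mu * (s / y1) = l * s / y" unfolding mu_def using assms yp by simp
    have "1 - mu = (1 - l) * y2 / y" using ymu2 yp by (simp add: eq_divide_eq mult.commute)
    then have q2: "(1 - mu) * (s / y2) = (1 - l) * s / y" using y2 yp by simp
    have eq: "s / y = mu * (s / y1) + (1 - mu) * (s / y2)"
      unfolding q1 q2 by (simp add: add_divide_distrib[symmetric] algebra_simps)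
    have "ph (s / y) \<le> mu * ph (s / y1) + (1 - mu) * ph (s / y2)"
      unfolding eq using mu assms y2 by (intro phconv) auto
    then have "y * ph (s / y) \<le> y * (mu * ph (s / y1) + (1 - mu) * ph (s / y2))"
      using yp by (intro mult_left_mono) auto
    also have "\<dots> = (y * mu) * ph (s / y1) + (y * (1 - mu)) * ph (s / y2)"
      by (simp add: algebra_simps)
    also have "\<dots> = l * y1 * ph (s / y1) + (1 - l) * y2 * ph (s / y2)"
      unfolding ymu ymu2 ..
    finally show ?thesis unfolding y_def .
  qed
qed

lemma Fmono_x:
  assumes "0 < a" "a < b" "b \<le> t" "t \<le> 1" "b < 1"
  shows "F b t < F a t"
proof (cases "b = t")
  case True
  then show ?thesis using F0[of t] Fpos[of a t] assms by auto
next
  case False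
  then have bt: "b < t" using assms by auto
  define l where "l = (t - b) / (t - a)"
  have l: "0 < l" "l < 1" using assms bt unfolding l_def by (auto simp: field_simps)
  have b1: "b = l * a + (1 - l) * t" using assms bt by (intro lin_comb[OF _ l_def, symmetric]) auto
  have b2: "1 - b = l * (1 - a) + (1 - l) * (1 - t)" unfolding b1 by (simp add: algebra_simps)
  have p1: "b * ph (t / b) \<le> l * a * ph (t / a) + (1 - l) * t * ph (t / t)"
    unfolding b1 using persp[of a t t l] assms l by auto
  have p2: "(1 - b) * ph ((1 - t) / (1 - b)) \<le> l * (1 - a) * ph ((1 - t) / (1 - a)) + (1 - l) * (1 - t) * ph ((1 - t) / (1 - t))"
    unfolding b2 using persp[of "1 - a" "1 - t" "1 - t" l] assms l by (cases "t = 1") auto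
  have Ftt: "t * ph (t / t) + (1 - t) * ph ((1 - t) / (1 - t)) = 0"
    using ph1 assms by (cases "t = 1") auto
  have "F b t \<le> l * F a t + (1 - l) * (t * ph (t / t) + (1 - t) * ph ((1 - t) / (1 - t)))"
    using p1 p2 unfolding F_def by (simp add: algebra_simps)
  also have "\<dots> = l * F a t" using Ftt by simp
  also have "\<dots> < F a t" using l Fpos[of a t] assms by auto
  finally show ?thesis .
qed

lemma Fcont_x:
  assumes "0 < c" "0 \<le> t" "t \<le> 1" "d \<le> 1" "d < 1 \<or> t = 1"
  shows "continuous_on {c..d} (\<lambda>x. F x t)"
proof -
  have c1: "continuous_on {c..d} (\<lambda>x. ph (t / x))"
    using assms by (intro continuous_on_compose2[OF phcont] continuous_intros) auto
  show ?thesis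
  proof (cases "t = 1")
    case True
    then show ?thesis unfolding F_def using c1 ph1 by (simp, intro continuous_intros c1)
  next
    case False
    then have d: "d < 1" using assms by auto
    have c2: "continuous_on {c..d} (\<lambda>x. ph ((1 - t) / (1 - x)))"
      using assms d by (intro continuous_on_compose2[OF phcont] continuous_intros) auto
    show ?thesis unfolding F_def by (intro continuous_intros c1 c2)
  qed
qed

lemma Fbig:
  assumes "0 < s" "s \<le> 1"
  shows "\<exists>x. 0 < x \<and> x < s \<and> F x s > M"
proof -
  obtain K where K: "K \<ge> 0" "\<And>u. u \<in> {0..1} \<Longrightarrow> ph u \<ge> - K" using phlb by auto
  obtain N where N: "\<And>u. u \<ge> N \<Longrightarrow> ph u \<ge> ((\<bar>M\<bar> + K + 1) / s) * u" using phsl by blast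
  define x where "x = s / (\<bar>N\<bar> + 2)"
  have dp: "\<bar>N\<bar> + 2 > 0" by simp
  have "0 < s + s * \<bar>N\<bar>" using assms by (intro add_pos_nonneg) auto
  then have "s < s * (\<bar>N\<bar> + 2)" by (simp add: distrib_left)
  then have x: "0 < x" "x < s" unfolding x_def using assms dp by (auto simp: divide_less_eq)
  have sx: "s / x = \<bar>N\<bar> + 2" unfolding x_def using assms by simp
  have "ph (s / x) \<ge> ((\<bar>M\<bar> + K + 1) / s) * (s / x)" using N sx by simp
  then have "x * ph (s / x) \<ge> x * (((\<bar>M\<bar> + K + 1) / s) * (s / x))" using x by (intro mult_left_mono) auto
  also have "x * (((\<bar>M\<bar> + K + 1) / s) * (s / x)) = \<bar>M\<bar> + K + 1" using x assms by simp
  finally have a: "x * ph (s / x) \<ge> \<bar>M\<bar> + K + 1" .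
  have "(1 - s) / (1 - x) \<in> {0..1}" using x assms by (auto simp: field_simps)
  then have "ph ((1 - s) / (1 - x)) \<ge> - K" using K by auto
  then have "(1 - x) * ph ((1 - s) / (1 - x)) \<ge> (1 - x) * (- K)" using x assms
    by (intro mult_left_mono) auto
  moreover have "(1 - x) * (- K) \<ge> - K" using x assms K by (simp add: algebra_simps)
  ultimately have "(1 - x) * ph ((1 - s) / (1 - x)) \<ge> - K" by linarith
  then have "F x s > M" using a unfolding F_def by linarith
  then show ?thesis using x by blast
qed

end

context rphi begin

definition S :: "real \<Rightarrow> real \<Rightarrow> real set" where
  "S d x = {t \<in> {x..1}. F x t \<le> d}"

lemma Gdef:
  assumes "0 < x" "x < 1"
  shows "g_fun phi d x = Sup (S d x)"
proof -
  have "{t \<in> {x..1}. ereal x * phi (t / x) + ereal (1 - x) * phi ((1 - t) / (1 - x)) \<le> ereal d} = S d x"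
    unfolding S_def using Fe assms by auto
  then show ?thesis unfolding g_fun_def using assms by simp
qed

lemma xS: "0 < x \<Longrightarrow> x < 1 \<Longrightarrow> 0 < d \<Longrightarrow> x \<in> S d x"
  unfolding S_def using F0 by simp

lemma Sbdd: "bdd_above (S d x)"
  unfolding S_def by (intro bdd_aboveI[of _ 1]) auto

lemma Gbounds:
  assumes "0 < x" "x < 1" "0 < d"
  shows "x \<le> g_fun phi d x" "g_fun phi d x \<le> 1"
proof -
  show "x \<le> g_fun phi d x" unfolding Gdef[OF assms(1,2)] using cSup_upper[OF xS[OF assms] Sbdd] .
  show "g_fun phi d x \<le> 1" unfolding Gdef[OF assms(1,2)]
    using xS[OF assms] by (intro cSup_least) (auto simp: S_def)
qed

lemma Gone:
  assumes "0 < x" "x < 1" "F x 1 \<le> d"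
  shows "g_fun phi d x = 1"
  unfolding Gdef[OF assms(1,2)] using assms
  by (intro cSup_eq_maximum) (auto simp: S_def)

lemma Geq:
  assumes "0 < x" "x < 1" "x \<le> s" "s \<le> 1" "F x s = d"
  shows "g_fun phi d x = s"
  unfolding Gdef[OF assms(1,2)]
proof (rule cSup_eq_maximum)
  show "s \<in> S d x" unfolding S_def using assms by auto
  fix t assume "t \<in> S d x"
  then have t: "x \<le> t" "t \<le> 1" "F x t \<le> d" unfolding S_def by auto
  show "t \<le> s"
  proof (rule ccontr)
    assume "\<not> t \<le> s"
    then have "F x s < F x t" using Fmono_t[of x s t] assms t by auto
    then show False using t assms by simp
  qed
qed

lemma Gcross:
  assumes "0 < x" "x < 1" "0 < d" "F x 1 > d"
  shows "\<exists>s. x < s \<and> s < 1 \<and> F x s = d \<and> g_fun phi d x = s"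
proof -
  have "continuous_on {x..1} (F x)"
    using Fcont_t[OF assms(1,2)] by (rule continuous_on_subset) (use assms in auto)
  then obtain s where s: "x \<le> s" "s \<le> 1" "F x s = d"
    using IVT'[of "F x" x d 1] F0[OF assms(1,2)] assms by auto
  have "s \<noteq> x" using s F0[OF assms(1,2)] assms by auto
  moreover have "s \<noteq> 1" using s assms by auto
  ultimately show ?thesis using s Geq[OF assms(1,2) s] by (intro exI[of _ s]) auto
qed

lemma Ggt:
  assumes "0 < x" "x < 1" "0 < d"
  shows "g_fun phi d x > x"
proof (cases "F x 1 \<le> d")
  case True then show ?thesis using Gone assms by simp
next
  case False then show ?thesis using Gcross[OF assms] by auto
qed

lemma Hdec:
  assumes "0 < a" "a < b" "b \<le> 1"
  shows "F b 1 < F a 1"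
proof (cases "b = 1")
  case True
  then show ?thesis using F11 Fpos[of a 1] assms by auto
next
  case False
  then show ?thesis using Fmono_x[of a b 1] assms by auto
qed

lemma Heq:
  assumes "0 < y" "y < 1"
  shows "ereal y * phi (1 / y) + ereal (1 - y) * phi 0 = ereal (F y 1)"
  using Fe[OF assms, of 1] by simp

end

context rphi begin

lemma part2:
  assumes d: "\<delta> > 0"
  shows "(\<exists>x\<delta>. x\<delta> \<in> {0<..<1} \<and>
              ereal x\<delta> * phi (1 / x\<delta>) + ereal (1 - x\<delta>) * phi 0 = ereal \<delta> \<and>
              (\<forall>y\<in>{0<..<1}. ereal y * phi (1 / y) + ereal (1 - y) * phi 0 = ereal \<delta> \<longrightarrow> y = x\<delta>) \<and>
              continuous_on {0..x\<delta>} (g_fun phi \<delta>) \<and>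
              strict_mono_on {0..x\<delta>} (g_fun phi \<delta>) \<and>
              (\<forall>x\<in>{x\<delta>..1}. g_fun phi \<delta> x = 1)) \<and>
          (\<forall>x\<in>{0<..<1}. g_fun phi \<delta> x > x \<and>
              mono_on {0<..} (\<lambda>d. g_fun phi d x) \<and>
              ((\<lambda>d. g_fun phi d x) \<longlongrightarrow> x) (at_right 0))"
proof (intro conjI)
  let ?G = "g_fun phi \<delta>"
  obtain y0 where y0: "0 < y0" "y0 < 1" "F y0 1 > \<delta>" using Fbig[of 1 \<delta>] by auto
  have "continuous_on {y0..1} (\<lambda>x. F x 1)" using y0 by (intro Fcont_x) auto
  then obtain xd where xd0: "y0 \<le> xd" "xd \<le> 1" "F xd 1 = \<delta>"
    using IVT2'[of "\<lambda>x. F x 1" 1 \<delta> y0] y0 F11 d by auto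
  have xd: "0 < xd" "xd < 1" using xd0 y0 F11 d by (auto simp: less_le)
  have g0: "?G 0 = 0" and g1: "?G 1 = 1" unfolding g_fun_def by auto
  have above: "?G x = 1" if "x \<in> {xd..1}" for x
  proof (cases "x = 1")
    case True then show ?thesis using g1 by simp
  next
    case False
    then have x: "0 < x" "x < 1" "xd \<le> x" using that xd by auto
    have "F x 1 \<le> \<delta>"
    proof (cases "x = xd")
      case True then show ?thesis using xd0 by simp
    next
      case False then show ?thesis using Hdec[of xd x] x xd xd0 by auto
    qed
    then show ?thesis using Gone x by simp
  qed
  have below: "F x 1 > \<delta>" if "0 < x" "x < xd" for x
    using Hdec[of x xd] that xd xd0 by auto
  have sm: "?G x < ?G y" if "0 \<le> x" "x < y" "y \<le> xd" for x y
  proof (cases "x = 0")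
    case True
    then show ?thesis using g0 Ggt[of y \<delta>] that xd d by auto
  next
    case False
    then have x: "0 < x" "x < 1" using that xd by auto
    have y: "0 < y" "y < 1" using that x xd by auto
    have "x < xd" using that by linarith
    then obtain s where s: "x < s" "s < 1" "F x s = \<delta>" "?G x = s"
      using Gcross[OF x d below[OF x(1)]] by blast
    show ?thesis
    proof (cases "s \<le> y")
      case True then show ?thesis using Ggt[OF y d] s by simp
    next
      case False
      then have "F y s < F x s" using Fmono_x[of x y s] x y s that by auto
      then have Fys: "F y s < \<delta>" using s by simp
      show ?thesis
      proof (cases "F y 1 \<le> \<delta>")
        case True then show ?thesis using Gone[OF y True] s by simp
      next
        case False
        then obtain s' where s': "y < s'" "s' < 1" "F y s' = \<delta>" "?G y = s'"
          using Gcross[OF y d] by auto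
        have "s < s'"
        proof (rule ccontr)
          assume "\<not> s < s'"
          then have "s' < s \<or> s' = s" by auto
          then have "F y s' \<le> F y s" using Fmono_t[of y s' s] y s' s by auto
          then show False using Fys s' by simp
        qed
        then show ?thesis using s s' by simp
      qed
    qed
  qed
  have surj: "\<exists>y. 0 < y \<and> y < xd \<and> ?G y = z" if z: "0 < z" "z < 1" for z
  proof -
    obtain x0 where x0: "0 < x0" "x0 < z" "F x0 z > \<delta>" using Fbig[of z \<delta>] z by auto
    have "continuous_on {x0..z} (\<lambda>x. F x z)" using x0 z by (intro Fcont_x) auto
    then obtain y where y: "x0 \<le> y" "y \<le> z" "F y z = \<delta>"
      using IVT2'[of "\<lambda>x. F x z" z \<delta> x0] x0 z F0[of z] d by auto
    have "y \<noteq> z" using y F0[of z] z d by auto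
    then have y': "0 < y" "y < 1" "y < z" using y x0 z by auto
    have Gy: "?G y = z" using Geq[of y z \<delta>] y y' z by auto
    have "y < xd"
    proof (rule ccontr)
      assume "\<not> y < xd"
      then have "?G y = 1" using above y' by auto
      then show False using Gy z by simp
    qed
    then show ?thesis using y' Gy by blast
  qed
  define G' where "G' = (\<lambda>v. if v < 0 then v else if v \<le> xd then ?G v else 1 + (v - xd))"
  have Grange: "0 \<le> ?G v \<and> ?G v \<le> 1" if "0 \<le> v" "v \<le> xd" for v
  proof (cases "v = 0")
    case True then show ?thesis using g0 by simp
  next
    case False
    then show ?thesis using Gbounds[of v \<delta>] that xd d by auto
  qed
  have Gmono: "?G u \<le> ?G v" if "0 \<le> u" "u \<le> v" "v \<le> xd" for u v
    using sm[of u v] that by (cases "u = v") auto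
  have G'mono: "G' u \<le> G' v" if "u \<le> v" for u v
    using that Grange[of u] Grange[of v] Gmono[of u v] unfolding G'_def by auto
  have "G' ` UNIV = UNIV"
  proof (intro set_eqI iffI)
    fix z :: real
    show "z \<in> G' ` UNIV"
    proof (cases "z < 0")
      case True then show ?thesis unfolding G'_def by (intro image_eqI[of _ _ z]) auto
    next
      case nz: False
      show ?thesis
      proof (cases "z = 0")
        case True then show ?thesis unfolding G'_def using g0 xd
          by (intro image_eqI[of _ _ 0]) auto
      next
        case nz0: False
        show ?thesis
        proof (cases "z < 1")
          case True
          then obtain y where "0 < y" "y < xd" "?G y = z" using surj[of z] nz nz0 by auto
          then show ?thesis unfolding G'_def by (intro image_eqI[of _ _ y]) auto
        next
          case False
          then have "G' (xd + (z - 1)) = z" unfolding G'_def using xd above[of xd] by auto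
          then show ?thesis by (metis rangeI)
        qed
      qed
    qed
  qed auto
  then have "continuous_on UNIV G'"
    by (intro continuous_onI_mono) (auto intro: G'mono)
  then have "continuous_on {0..xd} G'" by (rule continuous_on_subset) auto
  then have cont: "continuous_on {0..xd} ?G"
    by (rule continuous_on_eq) (auto simp: G'_def)
  have smo: "strict_mono_on {0..xd} ?G"
    by (rule strict_mono_onI) (use sm in auto)
  have uniq: "\<forall>y\<in>{0<..<1}. ereal y * phi (1 / y) + ereal (1 - y) * phi 0 = ereal \<delta> \<longrightarrow> y = xd"
  proof (intro ballI impI)
    fix y assume y: "y \<in> {0<..<1}" and "ereal y * phi (1 / y) + ereal (1 - y) * phi 0 = ereal \<delta>"
    then have Fy: "F y 1 = \<delta>" using Heq[of y] by auto
    show "y = xd"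
    proof (rule ccontr)
      assume "y \<noteq> xd"
      then have "y < xd \<or> xd < y" by auto
      then show False using Hdec[of y xd] Hdec[of xd y] y xd Fy xd0 by auto
    qed
  qed
  show "\<exists>x\<delta>. x\<delta> \<in> {0<..<1} \<and>
              ereal x\<delta> * phi (1 / x\<delta>) + ereal (1 - x\<delta>) * phi 0 = ereal \<delta> \<and>
              (\<forall>y\<in>{0<..<1}. ereal y * phi (1 / y) + ereal (1 - y) * phi 0 = ereal \<delta> \<longrightarrow> y = x\<delta>) \<and>
              continuous_on {0..x\<delta>} ?G \<and> strict_mono_on {0..x\<delta>} ?G \<and> (\<forall>x\<in>{x\<delta>..1}. ?G x = 1)"
  proof -
    have e: "ereal xd * phi (1 / xd) + ereal (1 - xd) * phi 0 = ereal \<delta>"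
      using Heq[of xd] xd xd0 by simp
    have m: "xd \<in> {0<..<1}" using xd by simp
    have ab: "\<forall>x\<in>{xd..1}. ?G x = 1" using above by blast
    show ?thesis by (intro exI[of _ xd] conjI; fact)
  qed
  show "\<forall>x\<in>{0<..<1}. g_fun phi \<delta> x > x \<and>
              mono_on {0<..} (\<lambda>d. g_fun phi d x) \<and>
              ((\<lambda>d. g_fun phi d x) \<longlongrightarrow> x) (at_right 0)"
  proof (intro ballI conjI)
    fix x :: real assume "x \<in> {0<..<1}"
    then have x: "0 < x" "x < 1" by auto
    show "g_fun phi \<delta> x > x" using Ggt[OF x d] .
    show "mono_on {0<..} (\<lambda>d. g_fun phi d x)"
    proof (rule mono_onI)
      fix r s :: real assume "r \<in> {0<..}" "s \<in> {0<..}" "r \<le> s"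
      then show "g_fun phi r x \<le> g_fun phi s x"
        unfolding Gdef[OF x] using xS[OF x, of r] Sbdd
        by (intro cSup_subset_mono) (auto simp: S_def)
    qed
    show "((\<lambda>d. g_fun phi d x) \<longlongrightarrow> x) (at_right 0)"
    proof (rule order_tendstoI)
      fix a assume "a < x"
      then show "eventually (\<lambda>d. a < g_fun phi d x) (at_right 0)"
        unfolding eventually_at_right_field using Gbounds(1)[OF x]
        by (intro exI[of _ 1]) (auto intro: less_le_trans)
    next
      fix b assume b: "x < b"
      define s where "s = min ((x + b) / 2) ((x + 1) / 2)"
      have s: "x < s" "s < 1" "s < b" unfolding s_def using x b by (auto simp: min_def)
      have eta: "F x s > 0" using Fpos[of x s] x s by auto
      have "g_fun phi dd x < b" if dd: "0 < dd" "dd < F x s" for dd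
      proof -
        have "Sup (S dd x) \<le> s"
        proof (rule cSup_least)
          show "S dd x \<noteq> {}" using xS[OF x dd(1)] by auto
          fix t assume "t \<in> S dd x"
          then have t: "x \<le> t" "t \<le> 1" "F x t \<le> dd" unfolding S_def by auto
          show "t \<le> s"
          proof (rule ccontr)
            assume "\<not> t \<le> s"
            then have "F x s < F x t" using Fmono_t[of x s t] x s t by auto
            then show False using t dd by simp
          qed
        qed
        then show ?thesis unfolding Gdef[OF x] using s by simp
      qed
      then show "eventually (\<lambda>d. g_fun phi d x < b) (at_right 0)"
        unfolding eventually_at_right_field using eta by blast
    qed
  qed
qed

end

theorem mainTheorem5:
  fixes P :: "'a measure" and phi :: "real \<Rightarrow> ereal" and \<delta> :: real
  assumes "prob_space P" and "\<delta> > 0" and "admissible_phi phi"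
  shows "(\<forall>A\<in>sets P. upper_prob phi P \<delta> A = g_fun phi \<delta> (measure P A)) \<and>
         ((\<forall>x\<ge>0. phi x \<noteq> \<infinity>) \<and> strictly_convex_ext phi \<and>
          ((\<lambda>x. phi x / ereal x) \<longlongrightarrow> \<infinity>) at_top \<longrightarrow>
          (\<exists>x\<delta>. x\<delta> \<in> {0<..<1} \<and>
              ereal x\<delta> * phi (1 / x\<delta>) + ereal (1 - x\<delta>) * phi 0 = ereal \<delta> \<and>
              (\<forall>y\<in>{0<..<1}. ereal y * phi (1 / y) + ereal (1 - y) * phi 0 = ereal \<delta> \<longrightarrow> y = x\<delta>) \<and>
              continuous_on {0..x\<delta>} (g_fun phi \<delta>) \<and>
              strict_mono_on {0..x\<delta>} (g_fun phi \<delta>) \<and>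
              (\<forall>x\<in>{x\<delta>..1}. g_fun phi \<delta> x = 1)) \<and>
          (\<forall>x\<in>{0<..<1}. g_fun phi \<delta> x > x \<and>
              mono_on {0<..} (\<lambda>d. g_fun phi d x) \<and>
              ((\<lambda>d. g_fun phi d x) \<longlongrightarrow> x) (at_right 0)))"
proof -
  have p1: "\<forall>A\<in>sets P. upper_prob phi P \<delta> A = g_fun phi \<delta> (measure P A)"
    using part1[OF assms(1,2,3)] by blast
  show ?thesis
  proof (rule conjI[OF p1], rule impI)
    assume h: "(\<forall>x\<ge>0. phi x \<noteq> \<infinity>) \<and> strictly_convex_ext phi \<and>
          ((\<lambda>x. phi x / ereal x) \<longlongrightarrow> \<infinity>) at_top"
    interpret rphi phi using assms(3) h by unfold_locales auto
    show "(\<exists>x\<delta>. x\<delta> \<in> {0<..<1} \<and>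
              ereal x\<delta> * phi (1 / x\<delta>) + ereal (1 - x\<delta>) * phi 0 = ereal \<delta> \<and>
              (\<forall>y\<in>{0<..<1}. ereal y * phi (1 / y) + ereal (1 - y) * phi 0 = ereal \<delta> \<longrightarrow> y = x\<delta>) \<and>
              continuous_on {0..x\<delta>} (g_fun phi \<delta>) \<and>
              strict_mono_on {0..x\<delta>} (g_fun phi \<delta>) \<and>
              (\<forall>x\<in>{x\<delta>..1}. g_fun phi \<delta> x = 1)) \<and>
          (\<forall>x\<in>{0<..<1}. g_fun phi \<delta> x > x \<and>
              mono_on {0<..} (\<lambda>d. g_fun phi d x) \<and>
              ((\<lambda>d. g_fun phi d x) \<longlongrightarrow> x) (at_right 0))"
      by (rule part2[OF assms(2)])
  qed
qed

end
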